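(* Let $\Theta=S\cup E\cup X$ be an action theory whose big model $M_{big}=\langle W_{big},R_{big}\rangle$ is a model of $\Theta$. Then for every PDL-model $M=\langle W,R\rangle$ with $M\models\Theta$ there is a minimal (with respect to set inclusion) $R'\subseteq R_{big}\setminus R$ such that $\langle \mathrm{val}(S),R\cup R'\rangle$ is a model of $\Theta$.
   Context: Fix a set $\mathrm{Act}$ of atomic actions and a set $\mathrm{Prop}$ of atoms. Boolean formulas are classical propositional formulas over $\mathrm{Prop}$; a valuation is a maximal consistent set of literals; $\mathrm{val}(S)$ is the set of valuations satisfying every formula of $S$. Modal formulas are built from Boolean formulas with the Boolean connectives and $[a]$ for $a\in\mathrm{Act}$; $\langle a\rangle\Phi:=\neg[a]\neg\Phi$. A PDL-model is $M=\langle W,R\rangle$, $W$ a set of valuations, $R$ assigning to each $a$ a relation $R_a\subseteq W\times W$ (relations are compared as sets of labelled pairs); truth at worlds is standard ($w\models p$ iff $p\in w$; $w\models[a]\Phi$ iff all $R_a$-successors satisfy $\Phi$), and $M\models\Theta$ iff every formula of $\Theta$ holds at every world. A static law is a Boolean formula; an effect law for $a$ is $\varphi\to[a]\psi$; an executability law for $a$ is $\varphi\to\langle a\rangle\top$ ($\varphi,\psi$ Boolean). An action theory is $\Theta=S\cup E\cup X$ (static, effect, executability laws); $E_a$ is the set of effect laws for $a$. The big model of $\Theta$ is $M_{big}=\langle W_{big},R_{big}\rangle$ with $W_{big}=\mathrm{val}(S)$ and $(R_{big})_a=\{(w,w')\in W_{big}^2:$ for all $\varphi\to[a]\psi\in E_a$,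 if $w\models\varphi$ then $w'\models\psi\}$. *)

theory Defs
  imports Main
begin

datatype 'p bform = BTop | BAtom 'p | BNot "'p bform" | BAnd "'p bform" "'p bform"
  | BOr "'p bform" "'p bform" | BImp "'p bform" "'p bform"

text \<open>A valuation (maximal consistent set of literals) is represented by the set of
  atoms it makes true.\<close>
type_synonym 'p valuation = "'p set"

fun bsat :: "'p valuation \<Rightarrow> 'p bform \<Rightarrow> bool" where
  "bsat w BTop = True"
| "bsat w (BAtom p) = (p \<in> w)"
| "bsat w (BNot f) = (\<not> bsat w f)"
| "bsat w (BAnd f g) = (bsat w f \<and> bsat w g)"
| "bsat w (BOr f g) = (bsat w f \<or> bsat w g)"
| "bsat w (BImp f g) = (bsat w f \<longrightarrow> bsat w g)"

definition val :: "'p bform set \<Rightarrow> 'p valuation set" where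
  "val S = {w. \<forall>f\<in>S. bsat w f}"

datatype ('a, 'p) mform = MBool "'p bform" | MNot "('a, 'p) mform"
  | MAnd "('a, 'p) mform" "('a, 'p) mform" | MOr "('a, 'p) mform" "('a, 'p) mform"
  | MImp "('a, 'p) mform" "('a, 'p) mform" | MBox 'a "('a, 'p) mform"

definition MDia :: "'a \<Rightarrow> ('a, 'p) mform \<Rightarrow> ('a, 'p) mform" where
  "MDia a F = MNot (MBox a (MNot F))"

type_synonym ('a, 'p) rel = "('a \<times> 'p valuation \<times> 'p valuation) set"

definition pdl_model :: "'p valuation set \<Rightarrow> ('a, 'p) rel \<Rightarrow> bool" where
  "pdl_model W R \<longleftrightarrow> (\<forall>(a, w, w') \<in> R. w \<in> W \<and> w' \<in> W)"

fun msat :: "'p valuation set \<Rightarrow> ('a, 'p) rel \<Rightarrow> 'p valuation \<Rightarrow> ('a, 'p) mform \<Rightarrow> bool" where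
  "msat W R w (MBool f) = bsat w f"
| "msat W R w (MNot F) = (\<not> msat W R w F)"
| "msat W R w (MAnd F G) = (msat W R w F \<and> msat W R w G)"
| "msat W R w (MOr F G) = (msat W R w F \<or> msat W R w G)"
| "msat W R w (MImp F G) = (msat W R w F \<longrightarrow> msat W R w G)"
| "msat W R w (MBox a F) = (\<forall>w'. (a, w, w') \<in> R \<longrightarrow> msat W R w' F)"

definition models :: "'p valuation set \<Rightarrow> ('a, 'p) rel \<Rightarrow> ('a, 'p) mform set \<Rightarrow> bool" where
  "models W R \<Theta> \<longleftrightarrow> (\<forall>F\<in>\<Theta>. \<forall>w\<in>W. msat W R w F)"

text \<open>An action theory: static laws S, effect laws E (triples (a, phi, psi) standing for
  phi \<longrightarrow> [a] psi), executability laws X (pairs (a, phi) standing for phi \<longrightarrow> <a> T).\<close>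
record ('a, 'p) action_theory =
  stat :: "'p bform set"
  eff :: "('a \<times> 'p bform \<times> 'p bform) set"
  exe :: "('a \<times> 'p bform) set"

definition theory_formulas :: "('a, 'p) action_theory \<Rightarrow> ('a, 'p) mform set" where
  "theory_formulas T =
     MBool ` stat T
   \<union> (\<lambda>(a, \<phi>, \<psi>). MImp (MBool \<phi>) (MBox a (MBool \<psi>))) ` eff T
   \<union> (\<lambda>(a, \<phi>). MImp (MBool \<phi>) (MDia a (MBool BTop))) ` exe T"

definition W_big :: "('a, 'p) action_theory \<Rightarrow> 'p valuation set" where
  "W_big T = val (stat T)"

definition R_big :: "('a, 'p) action_theory \<Rightarrow> ('a, 'p) rel" where
  "R_big T = {(a, w, w'). w \<in> W_big T \<and> w' \<in> W_big T \<and>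
     (\<forall>\<phi> \<psi>. (a, \<phi>, \<psi>) \<in> eff T \<longrightarrow> bsat w \<phi> \<longrightarrow> bsat w' \<psi>)}"

end

theory Submission
  imports Defs
begin

lemma msat_dia[simp]: "msat W R w (MDia a (MBool BTop)) = (\<exists>w'. (a, w, w') \<in> R)"
  by (simp add: MDia_def)

lemma models_thy:
  "models W R (theory_formulas T) \<longleftrightarrow>
    (\<forall>w\<in>W. (\<forall>f\<in>stat T. bsat w f)
       \<and> (\<forall>a \<phi> \<psi>. (a,\<phi>,\<psi>) \<in> eff T \<longrightarrow> bsat w \<phi> \<longrightarrow> (\<forall>w'. (a,w,w') \<in> R \<longrightarrow> bsat w' \<psi>))
       \<and> (\<forall>a \<phi>. (a,\<phi>) \<in> exe T \<longrightarrow> bsat w \<phi> \<longrightarrow> (\<exists>w'. (a,w,w') \<in> R)))"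
proof
  assume m: "models W R (theory_formulas T)"
  have A: "\<And>F w. F \<in> theory_formulas T \<Longrightarrow> w \<in> W \<Longrightarrow> msat W R w F" using m unfolding models_def by blast
  show "\<forall>w\<in>W. (\<forall>f\<in>stat T. bsat w f)
       \<and> (\<forall>a \<phi> \<psi>. (a,\<phi>,\<psi>) \<in> eff T \<longrightarrow> bsat w \<phi> \<longrightarrow> (\<forall>w'. (a,w,w') \<in> R \<longrightarrow> bsat w' \<psi>))
       \<and> (\<forall>a \<phi>. (a,\<phi>) \<in> exe T \<longrightarrow> bsat w \<phi> \<longrightarrow> (\<exists>w'. (a,w,w') \<in> R))"
  proof (intro ballI conjI allI impI)
    fix w f assume "w \<in> W" "f \<in> stat T"
    thus "bsat w f" using A[of "MBool f" w] unfolding theory_formulas_def by auto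
  next
    fix w a \<phi> \<psi> w' assume "w \<in> W" "(a,\<phi>,\<psi>) \<in> eff T" "bsat w \<phi>" "(a,w,w') \<in> R"
    thus "bsat w' \<psi>" using A[of "MImp (MBool \<phi>) (MBox a (MBool \<psi>))" w] unfolding theory_formulas_def by force
  next
    fix w a \<phi> assume "w \<in> W" "(a,\<phi>) \<in> exe T" "bsat w \<phi>"
    thus "\<exists>w'. (a,w,w') \<in> R" using A[of "MImp (MBool \<phi>) (MDia a (MBool BTop))" w] unfolding theory_formulas_def by force
  qed
next
  assume "\<forall>w\<in>W. (\<forall>f\<in>stat T. bsat w f)
       \<and> (\<forall>a \<phi> \<psi>. (a,\<phi>,\<psi>) \<in> eff T \<longrightarrow> bsat w \<phi> \<longrightarrow> (\<forall>w'. (a,w,w') \<in> R \<longrightarrow> bsat w' \<psi>))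
       \<and> (\<forall>a \<phi>. (a,\<phi>) \<in> exe T \<longrightarrow> bsat w \<phi> \<longrightarrow> (\<exists>w'. (a,w,w') \<in> R))"
  thus "models W R (theory_formulas T)" unfolding models_def theory_formulas_def by fastforce
qed

theorem lemma3:
  fixes T :: "('a, 'p) action_theory"
  assumes "models (W_big T) (R_big T) (theory_formulas T)"
  shows "\<forall>W R. pdl_model W R \<and> models W R (theory_formulas T) \<longrightarrow>
    (\<exists>R'. R' \<subseteq> R_big T - R
       \<and> models (val (stat T)) (R \<union> R') (theory_formulas T)
       \<and> (\<forall>R''. R'' \<subset> R' \<longrightarrow> \<not> models (val (stat T)) (R \<union> R'') (theory_formulas T)))"
proof (intro allI impI)
  fix W R
  assume h: "pdl_model W R \<and> models W R (theory_formulas T)"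
  have RW: "\<And>a w w'. (a,w,w') \<in> R \<Longrightarrow> w \<in> W" using h unfolding pdl_model_def by blast
  have WS: "W \<subseteq> val (stat T)" using h unfolding models_thy val_def by blast
  have big: "\<And>w. w \<in> val (stat T) \<Longrightarrow> (\<forall>a \<phi>. (a,\<phi>) \<in> exe T \<longrightarrow> bsat w \<phi> \<longrightarrow> (\<exists>w'. (a,w,w') \<in> R_big T))"
    using assms unfolding models_thy W_big_def by blast
  define R' where "R' = {(a,w,w'). w \<in> val (stat T) - W \<and> (\<exists>\<phi>. (a,\<phi>) \<in> exe T \<and> bsat w \<phi>)
      \<and> w' = (SOME v. (a,w,v) \<in> R_big T)}"
  have R'big: "\<And>a w w'. (a,w,w') \<in> R' \<Longrightarrow> (a,w,w') \<in> R_big T"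
  proof -
    fix a w w' assume "(a,w,w') \<in> R'"
    then obtain \<phi> where "w \<in> val (stat T)" "(a,\<phi>) \<in> exe T" "bsat w \<phi>" "w' = (SOME v. (a,w,v) \<in> R_big T)"
      unfolding R'_def by blast
    with big show "(a,w,w') \<in> R_big T" by (metis someI_ex)
  qed
  have sub: "R' \<subseteq> R_big T - R"
    using R'big RW unfolding R'_def by blast
  have mod: "models (val (stat T)) (R \<union> R') (theory_formulas T)"
    unfolding models_thy
  proof (intro ballI conjI allI impI)
    fix w f assume "w \<in> val (stat T)" "f \<in> stat T" thus "bsat w f" by (simp add: val_def)
  next
    fix w a \<phi> \<psi> w' assume w: "w \<in> val (stat T)" and e: "(a,\<phi>,\<psi>) \<in> eff T" "bsat w \<phi>"
      and r: "(a,w,w') \<in> R \<union> R'"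
    show "bsat w' \<psi>"
    proof (cases "(a,w,w') \<in> R")
      case True thus ?thesis using h e RW[OF True] unfolding models_thy by blast
    next
      case False thus ?thesis using r R'big[of a w w'] e unfolding R_big_def by auto
    qed
  next
    fix w a \<phi> assume w: "w \<in> val (stat T)" and x: "(a,\<phi>) \<in> exe T" "bsat w \<phi>"
    show "\<exists>w'. (a,w,w') \<in> R \<union> R'"
    proof (cases "w \<in> W")
      case True thus ?thesis using h x unfolding models_thy by blast
    next
      case False thus ?thesis using w x unfolding R'_def by blast
    qed
  qed
  have min: "\<forall>R''. R'' \<subset> R' \<longrightarrow> \<not> models (val (stat T)) (R \<union> R'') (theory_formulas T)"
  proof (intro allI impI notI)
    fix R'' assume s: "R'' \<subset> R'" and m: "models (val (stat T)) (R \<union> R'') (theory_formulas T)"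
    then obtain x where "x \<in> R'" "x \<notin> R''" by blast
    then obtain a w w' where e: "(a,w,w') \<in> R'" "(a,w,w') \<notin> R''" by (cases x) auto
    then obtain \<phi> where w: "w \<in> val (stat T)" "w \<notin> W" "(a,\<phi>) \<in> exe T" "bsat w \<phi>"
      and w': "w' = (SOME v. (a,w,v) \<in> R_big T)"
      unfolding R'_def by blast
    then obtain v where v: "(a,w,v) \<in> R \<union> R''" using m unfolding models_thy by blast
    have "(a,w,v) \<notin> R" using RW w by blast
    hence "(a,w,v) \<in> R'" using v s by blast
    hence "v = w'" using w' unfolding R'_def by blast
    thus False using v e \<open>(a,w,v) \<notin> R\<close> by blast
  qed
  show "\<exists>R'. R' \<subseteq> R_big T - R
       \<and> models (val (stat T)) (R \<union> R') (theory_formulas T)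
       \<and> (\<forall>R''. R'' \<subset> R' \<longrightarrow> \<not> models (val (stat T)) (R \<union> R'') (theory_formulas T))"
    using sub mod min by blast
qed

end
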